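(* Let $p>3$ be a prime and $f:V_n^{(p)}\to\mathbb{F}_p$ a function with $f(0)=0$. If $f(x)=f(-x)$ for all $x\in V_n^{(p)}$ and $\sum_{i\in\mathbb{F}_p^*}i^2N_i(f)=0$ in $\mathbb{F}_p$, where $N_i(f)=\#\{x\in V_n^{(p)}:f(x)=i\}$, then the linear code $\mathcal{C}_f=\{(af(x)+\langle b,x\rangle_n)_{x\in V_n^{(p)}\setminus\{0\}}:a\in\mathbb{F}_p,b\in V_n^{(p)}\}$ is self-orthogonal.
   Context: $V_n^{(p)}$ is an $n$-dimensional $\mathbb{F}_p$-vector space with a non-degenerate symmetric bilinear form $\langle\cdot,\cdot\rangle_n$. A linear code $\mathcal{C}\subseteq\mathbb{F}_p^N$ is self-orthogonal if $\mathcal{C}\subseteq\mathcal{C}^\perp$ with respect to the standard dot product. *)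

theory Defs
  imports "HOL-Analysis.Analysis"
begin

text \<open>V_n over F_p is modelled as 'a ^ 'n with CARD('a) = p prime; the form is an
arbitrary non-degenerate symmetric bilinear form on it.\<close>

definition nondeg_sym_bilinear :: "('a::field ^ 'n \<Rightarrow> 'a ^ 'n \<Rightarrow> 'a) \<Rightarrow> bool" where
  "nondeg_sym_bilinear B \<longleftrightarrow>
     (\<forall>x y z. B (x + y) z = B x z + B y z) \<and>
     (\<forall>c x z. B (c *s x) z = c * B x z) \<and>
     (\<forall>x y. B x y = B y x) \<and>
     (\<forall>x. (\<forall>y. B x y = 0) \<longrightarrow> x = 0)"

definition N_val :: "('v \<Rightarrow> 'a) \<Rightarrow> 'a \<Rightarrow> nat" where
  "N_val f i = card {x. f x = i}"

text \<open>The code C_f; a codeword is a function on V, read on coordinates V minus 0.\<close>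
definition code_f :: "('a::field ^ 'n \<Rightarrow> 'a ^ 'n \<Rightarrow> 'a) \<Rightarrow> ('a ^ 'n \<Rightarrow> 'a) \<Rightarrow> ('a ^ 'n \<Rightarrow> 'a) set" where
  "code_f B f = {(\<lambda>x. a * f x + B b x) | a b. True}"

definition self_orthogonal :: "'i set \<Rightarrow> ('i \<Rightarrow> 'a::comm_ring) set \<Rightarrow> bool" where
  "self_orthogonal I C \<longleftrightarrow> (\<forall>c\<in>C. \<forall>d\<in>C. (\<Sum>x\<in>I. c x * d x) = 0)"

end

theory Submission
  imports Defs "HOL-Number_Theory.Residues"
begin

lemma fin_vec:
  assumes "finite (UNIV :: 'a set)"
  shows "finite (UNIV :: ('a ^ 'n) set)"
proof -
  have "finite (PiE (UNIV::'n set) (\<lambda>_. UNIV :: 'a set))"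
    using assms by (intro finite_PiE) auto
  hence "finite (vec_lambda ` (PiE (UNIV::'n set) (\<lambda>_. UNIV :: 'a set)))" by simp
  moreover have "UNIV \<subseteq> vec_lambda ` (PiE (UNIV::'n set) (\<lambda>_. UNIV :: 'a set))"
  proof
    fix v :: "'a ^ 'n"
    have "v = vec_lambda (vec_nth v)" by simp
    moreover have "vec_nth v \<in> PiE (UNIV::'n set) (\<lambda>_. UNIV :: 'a set)" by simp
    ultimately show "v \<in> vec_lambda ` (PiE (UNIV::'n set) (\<lambda>_. UNIV :: 'a set))" by blast
  qed
  ultimately show ?thesis using finite_subset by blast
qed

lemma scale_sum:
  fixes g :: "'a::field ^ 'n \<Rightarrow> 'a"
  assumes "c \<noteq> 0" and "\<And>x. g (c *s x) = k * g x"
  shows "(\<Sum>x\<in>UNIV - {0}. g x) = k * (\<Sum>x\<in>UNIV - {0}. g x)"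
proof -
  have "(\<Sum>x\<in>UNIV - {0}. g x) = (\<Sum>x\<in>UNIV - {0}. g (c *s x))"
    by (rule sum.reindex_bij_witness[of _ "\<lambda>x. c *s x" "\<lambda>x. inverse c *s x"])
       (use assms(1) in \<open>auto simp: vector_smult_assoc\<close>)
  also have "\<dots> = k * (\<Sum>x\<in>UNIV - {0}. g x)"
    by (simp add: assms(2) sum_distrib_left)
  finally show ?thesis .
qed

theorem lemma13:
  fixes B :: "'a::field ^ 'n \<Rightarrow> 'a ^ 'n \<Rightarrow> 'a"
    and f :: "'a ^ 'n \<Rightarrow> 'a"
    and p :: nat
  assumes "prime p" and "p > 3" and "CARD('a) = p"
    and "nondeg_sym_bilinear B"
    and "f 0 = 0"
    and "\<forall>x. f x = f (- x)"
    and "(\<Sum>i\<in>UNIV - {0}. i ^ 2 * of_nat (N_val f i)) = (0::'a)"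
  shows "self_orthogonal (UNIV - {0}) (code_f B f)"
proof -
  have finA: "finite (UNIV :: 'a set)" proof (rule card_ge_0_finite)
    show "card (UNIV :: 'a set) > 0" using assms(2,3) by simp
  qed
  have finV: "finite (UNIV :: ('a ^ 'n) set)" using fin_vec[OF finA] .
  have "CHAR('a) dvd p" using CHAR_dvd_CARD[where 'a='a] assms(3) by simp
  hence charp: "CHAR('a) = p" using assms(1) CHAR_not_1[where 'a='a] unfolding prime_nat_iff by auto
  have two: "(2::'a) \<noteq> 0"
  proof
    assume "(2::'a) = 0"
    hence "of_nat 2 = (0::'a)" by simp
    hence "p dvd 2" using charp by (simp only: of_nat_eq_0_iff_char_dvd)
    hence "p \<le> 2" by (rule dvd_imp_le) simp
    thus False using assms(2) by linarith
  qed
  have three: "(3::'a) \<noteq> 0"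
  proof
    assume "(3::'a) = 0"
    hence "of_nat 3 = (0::'a)" by simp
    hence "p dvd 3" using charp by (simp only: of_nat_eq_0_iff_char_dvd)
    hence "p \<le> 3" by (rule dvd_imp_le) simp
    thus False using assms(2) by linarith
  qed
  have three3: "(3::'a) * s = 0" if "s = 4 * s" for s :: 'a
  proof -
    have "(4::'a) * s = 3 * s + s" by (simp add: distrib_right[symmetric])
    hence "3 * s + s = 0 + s" using that by simp
    thus ?thesis by (rule add_right_imp_eq)
  qed
  have Bdef: "nondeg_sym_bilinear B" by fact
  have Bsc: "B b (c *s x) = c * B b x" for b c x
    using Bdef unfolding nondeg_sym_bilinear_def by metis
  have neg: "- x = (-1::'a) *s x" for x :: "'a ^ 'n" by (rule vector_sneg_minus1)
  have S2: "(\<Sum>x\<in>UNIV - {0}. f x * B b x) = 0" for b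
  proof -
    have "(\<Sum>x\<in>UNIV - {0}. f x * B b x) = (-1) * (\<Sum>x\<in>UNIV - {0}. f x * B b x)"
    proof (rule scale_sum[of "-1"])
      fix x :: "'a ^ 'n"
      have "f ((-1::'a) *s x) = f x" unfolding neg[symmetric] by (rule sym, rule spec[OF assms(6)])
      moreover have "B b ((-1::'a) *s x) = - B b x" using Bsc[of b "-1" x] by simp
      ultimately show "f ((-1::'a) *s x) * B b ((-1::'a) *s x) = (-1) * (f x * B b x)"
        by simp
    qed simp
    hence "2 * (\<Sum>x\<in>UNIV - {0}. f x * B b x) = 0" by (simp add: algebra_simps)
    thus ?thesis using two by simp
  qed
  have S4: "(\<Sum>x\<in>UNIV - {0}. B b x * B b' x) = 0" for b b'
  proof -
    have "(\<Sum>x\<in>UNIV - {0}. B b x * B b' x) = 4 * (\<Sum>x\<in>UNIV - {0}. B b x * B b' x)"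
      by (rule scale_sum[of 2]) (use two in \<open>simp_all add: Bsc\<close>)
    hence "3 * (\<Sum>x\<in>UNIV - {0}. B b x * B b' x) = 0" using three3 by blast
    thus ?thesis using three by simp
  qed
  have S1: "(\<Sum>x\<in>UNIV - {0}. f x * f x) = 0"
  proof -
    have "(\<Sum>x\<in>UNIV - {0}. f x * f x) = (\<Sum>x\<in>UNIV. f x * f x)"
      using finV assms(5) by (intro sum.mono_neutral_left) auto
    also have "\<dots> = (\<Sum>i\<in>UNIV. \<Sum>x\<in>{x. x \<in> UNIV \<and> f x = i}. f x * f x)"
      using sum.group[OF finV finA, of f "\<lambda>x. f x * f x"] by simp
    also have "\<dots> = (\<Sum>i\<in>UNIV. i ^ 2 * of_nat (N_val f i))"
      by (intro sum.cong refl) (simp add: N_val_def power2_eq_square mult.commute)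
    also have "\<dots> = (\<Sum>i\<in>UNIV - {0}. i ^ 2 * of_nat (N_val f i))"
      using finA by (intro sum.mono_neutral_right) auto
    finally show ?thesis using assms(7) by simp
  qed
  show ?thesis
    unfolding self_orthogonal_def code_f_def
  proof (clarify)
    fix a b a' b'
    have "(\<Sum>x\<in>UNIV - {0}. (a * f x + B b x) * (a' * f x + B b' x))
      = a * a' * (\<Sum>x\<in>UNIV - {0}. f x * f x) + a * (\<Sum>x\<in>UNIV - {0}. f x * B b' x)
        + a' * (\<Sum>x\<in>UNIV - {0}. f x * B b x) + (\<Sum>x\<in>UNIV - {0}. B b x * B b' x)"
    proof -
      have e: "(a * f x + B b x) * (a' * f x + B b' x) =
         a * a' * (f x * f x) + a * (f x * B b' x) + a' * (f x * B b x) + B b x * B b' x" for x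
        by (simp add: algebra_simps)
      show ?thesis unfolding e sum.distrib sum_distrib_left[symmetric] by (rule refl)
    qed
    thus "(\<Sum>x\<in>UNIV - {0}. (a * f x + B b x) * (a' * f x + B b' x)) = 0"
      by (simp add: S1 S2 S4)
  qed
qed

end
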